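(* Let $G=(V,E)$ be a finite simple graph and let $z:E\to[0,1]$ be any function. Then there is a function $x:E\to\{0,1\}$ such that for every vertex $v\in V$, $$\sum_{e\ni v}z(e)-1<\sum_{e\ni v}x(e)\le\sum_{e\ni v}z(e)+1,$$ where the sums range over the edges of $G$ incident with $v$. *)

theory Defs
  imports Complex_Main
begin

definition finite_simple_graph :: "'a set \<Rightarrow> 'a set set \<Rightarrow> bool" where
  "finite_simple_graph V E \<longleftrightarrow> finite V \<and> (\<forall>e\<in>E. e \<subseteq> V \<and> card e = 2)"

definition incident_edges :: "'a set set \<Rightarrow> 'a \<Rightarrow> 'a set set" where
  "incident_edges E v = {e \<in> E. v \<in> e}"

end

theory Submission imports Defs begin

lemma kernel_exists:
  fixes a :: "'v \<Rightarrow> 'e \<Rightarrow> real"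
  assumes "finite T" "finite F" "card T < card F"
  shows "\<exists>d. (\<forall>e. e \<notin> F \<longrightarrow> d e = 0) \<and> (\<exists>e\<in>F. d e \<noteq> 0) \<and> (\<forall>v\<in>T. (\<Sum>e\<in>F. a v e * d e) = 0)"
  using assms
proof (induction T arbitrary: F a rule: finite_induct)
  case empty
  then obtain e0 where "e0 \<in> F" by fastforce
  then show ?case by (intro exI[of _ "\<lambda>e. if e = e0 then 1 else 0"]) auto
next
  case (insert v0 T F a)
  have cT: "card (insert v0 T) = Suc (card T)" using insert by simp
  show ?case
  proof (cases "\<forall>e\<in>F. a v0 e = 0")
    case True
    from insert.IH[of F a] insert.prems cT obtain d where
      d: "\<forall>e. e \<notin> F \<longrightarrow> d e = 0" "\<exists>e\<in>F. d e \<noteq> 0" "\<forall>v\<in>T. (\<Sum>e\<in>F. a v e * d e) = 0"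
      by auto
    then show ?thesis using True by (intro exI[of _ d]) auto
  next
    case False
    then obtain e0 where e0: "e0 \<in> F" "a v0 e0 \<noteq> 0" by auto
    define F' where "F' = F - {e0}"
    define a' where "a' = (\<lambda>v e. a v e - a v e0 * a v0 e / a v0 e0)"
    have "card F' = card F - 1" unfolding F'_def using e0 insert.prems by simp
    hence cF': "card T < card F'" using insert.prems cT by simp
    have fF': "finite F'" unfolding F'_def using insert.prems by simp
    from insert.IH[OF fF' cF', of a'] obtain d' where
      d': "\<forall>e. e \<notin> F' \<longrightarrow> d' e = 0" "\<exists>e\<in>F'. d' e \<noteq> 0" "\<forall>v\<in>T. (\<Sum>e\<in>F'. a' v e * d' e) = 0"
      by auto
    define X where "X = (\<Sum>e\<in>F'. a v0 e * d' e)"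
    define d where "d = d'(e0 := - X / a v0 e0)"
    have dF': "\<forall>e\<in>F'. d e = d' e" unfolding d_def F'_def by auto
    have sumF: "(\<Sum>e\<in>F. a v e * d e) = a v e0 * d e0 + (\<Sum>e\<in>F'. a v e * d' e)" for v
    proof -
      have "(\<Sum>e\<in>F. a v e * d e) = a v e0 * d e0 + (\<Sum>e\<in>F'. a v e * d e)"
        unfolding F'_def using sum.remove[OF insert.prems(1) e0(1)] by blast
      also have "(\<Sum>e\<in>F'. a v e * d e) = (\<Sum>e\<in>F'. a v e * d' e)"
        using dF' by (intro sum.cong) auto
      finally show ?thesis .
    qed
    show ?thesis
    proof (intro exI[of _ d] conjI ballI allI impI)
      fix e assume "e \<notin> F" thus "d e = 0" using d'(1) e0 unfolding d_def F'_def by auto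
    next
      from d'(2) obtain e where "e \<in> F'" "d' e \<noteq> 0" by auto
      thus "\<exists>e\<in>F. d e \<noteq> 0" using dF' unfolding F'_def by (intro bexI[of _ e]) auto
    next
      fix v assume v: "v \<in> insert v0 T"
      show "(\<Sum>e\<in>F. a v e * d e) = 0"
      proof (cases "v = v0")
        case True
        show ?thesis unfolding sumF True using e0(2) by (simp add: d_def X_def)
      next
        case False
        hence vT: "v \<in> T" using v by auto
        have "0 = (\<Sum>e\<in>F'. a' v e * d' e)" using d'(3) vT by auto
        also have "\<dots> = (\<Sum>e\<in>F'. a v e * d' e - (a v e0 / a v0 e0) * (a v0 e * d' e))"
          unfolding a'_def by (intro sum.cong) (auto simp: algebra_simps)
        also have "\<dots> = (\<Sum>e\<in>F'. a v e * d' e) - (a v e0 / a v0 e0) * X"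
          unfolding X_def by (simp add: sum_subtractf sum_distrib_left)
        also have "\<dots> = (\<Sum>e\<in>F. a v e * d e)"
          unfolding sumF using e0(2) by (simp add: d_def field_simps)
        finally show ?thesis by simp
      qed
    qed
  qed
qed


locale rnd =
  fixes V :: "'a set" and E :: "'a set set" and z :: "'a set \<Rightarrow> real"
  assumes finV: "finite V" and edges: "\<forall>e\<in>E. e \<subseteq> V \<and> card e = 2"
begin

lemma finE: "finite E"
proof -
  have "E \<subseteq> Pow V" using edges by auto
  thus ?thesis using finV finite_subset by blast
qed

abbreviation I where "I v \<equiv> incident_edges E v"

lemma finI: "finite (I v)" unfolding incident_edges_def using finE by simp

definition S where "S v = (\<Sum>e\<in>I v. z e)"
definition Fr where "Fr y = {e\<in>E. 0 < y e \<and> y e < 1}"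
definition Fv where "Fv y v = I v \<inter> Fr y"
definition lo where "lo y v = (\<Sum>e\<in>I v - Fr y. y e) - S v"
definition Inv where "Inv y \<longleftrightarrow> (\<forall>e\<in>E. 0 \<le> y e \<and> y e \<le> 1) \<and>
   (\<forall>v\<in>V. (2 \<le> card (Fv y v) \<longrightarrow> (\<Sum>e\<in>I v. y e) = S v) \<and>
           (card (Fv y v) \<le> 1 \<longrightarrow> lo y v > -1 \<and> lo y v + card (Fv y v) \<le> 1))"

lemma finFr: "finite (Fr y)" unfolding Fr_def using finE by simp
lemma finFv: "finite (Fv y v)" unfolding Fv_def using finI by simp

lemma sum_split: "(\<Sum>e\<in>I v. y e) = lo y v + S v + (\<Sum>e\<in>Fv y v. y e)"
  unfolding lo_def Fv_def using sum.Int_Diff[OF finI, of y v "Fr y"] by simp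

lemma tight_lo:
  assumes "(\<Sum>e\<in>I v. y e) = S v" "card (Fv y v) \<le> 1"
  shows "lo y v > -1 \<and> lo y v + card (Fv y v) \<le> 1"
proof -
  have lo: "lo y v = - (\<Sum>e\<in>Fv y v. y e)" using sum_split[of y v] assms(1) by simp
  show ?thesis
  proof (cases "card (Fv y v) = 0")
    case True
    hence "Fv y v = {}" using finFv[of y v] by simp
    thus ?thesis using lo True by simp
  next
    case False
    hence "card (Fv y v) = 1" using assms(2) by simp
    then obtain e where e: "Fv y v = {e}" by (auto simp: card_Suc_eq)
    hence "0 < y e \<and> y e < 1" unfolding Fv_def Fr_def by auto
    thus ?thesis using lo e by simp
  qed
qed

lemma move:
  fixes d :: "'a set \<Rightarrow> real"
  assumes inv: "Inv y" and dsupp: "\<forall>e. e \<notin> Fr y \<longrightarrow> d e = 0" and e0: "e0 \<in> Fr y" "d e0 \<noteq> 0"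
    and dcon: "\<forall>v\<in>V. 2 \<le> card (Fv y v) \<longrightarrow> (\<Sum>e\<in>I v. d e) = 0"
  shows "\<exists>y'. Inv y' \<and> card (Fr y') < card (Fr y)"
proof -
  define D where "D = {e\<in>Fr y. d e \<noteq> 0}"
  define \<rho> where "\<rho> = (\<lambda>e. if d e > 0 then (1 - y e) / d e else y e / (- d e))"
  have finD: "finite D" unfolding D_def using finFr[of y] by simp
  have neD: "D \<noteq> {}" unfolding D_def using e0 by auto
  define t where "t = Min (\<rho> ` D)"
  have "t \<in> \<rho> ` D" unfolding t_def using finD neD by (intro Min_in) auto
  then obtain e1 where e1: "e1 \<in> D" "t = \<rho> e1" by auto
  have tle: "t \<le> \<rho> e" if "e \<in> D" for e unfolding t_def using finD that by simp
  have frac: "0 < y e \<and> y e < 1" if "e \<in> Fr y" for e using that unfolding Fr_def by auto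
  have rpos: "\<rho> e > 0" if "e \<in> D" for e
    using frac[of e] that unfolding D_def \<rho>_def by (auto simp: field_simps)
  have tpos: "t > 0" using rpos e1 by simp
  define y' where "y' = (\<lambda>e. y e + t * d e)"
  have bnd: "0 \<le> y' e \<and> y' e \<le> 1" if "e \<in> E" for e
  proof (cases "d e = 0")
    case True thus ?thesis using inv that unfolding Inv_def y'_def by auto
  next
    case False
    hence eD: "e \<in> D" using dsupp unfolding D_def by auto
    have fe: "0 < y e \<and> y e < 1" using frac eD unfolding D_def by auto
    have te: "t \<le> \<rho> e" using tle eD .
    show ?thesis
    proof (cases "d e > 0")
      case True
      hence "t * d e \<le> 1 - y e" using te unfolding \<rho>_def by (simp add: pos_le_divide_eq)
      thus ?thesis using True tpos fe unfolding y'_def by (simp add: mult_pos_pos)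
    next
      case False
      hence dn: "d e < 0" using \<open>d e \<noteq> 0\<close> by simp
      have "t \<le> y e / (- d e)" using te False unfolding \<rho>_def by simp
      hence "t * (- d e) \<le> (y e / (- d e)) * (- d e)" using dn by (intro mult_right_mono) auto
      hence "t * (- d e) \<le> y e" using dn by simp
      moreover have "t * d e < 0" using dn tpos by (simp add: mult_pos_neg)
      ultimately show ?thesis using fe unfolding y'_def by simp
    qed
  qed
  have e1int: "y' e1 = 0 \<or> y' e1 = 1"
  proof -
    have "d e1 \<noteq> 0" using e1 unfolding D_def by auto
    thus ?thesis using e1(2) unfolding y'_def \<rho>_def by (auto simp: field_simps)
  qed
  have Frsub: "Fr y' \<subseteq> Fr y - {e1}"
  proof
    fix e assume e: "e \<in> Fr y'"
    show "e \<in> Fr y - {e1}"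
    proof (cases "e \<in> Fr y")
      case True thus ?thesis using e e1int unfolding Fr_def by auto
    next
      case False thus ?thesis using e dsupp unfolding Fr_def y'_def by auto
    qed
  qed
  have e1F: "e1 \<in> Fr y" using e1 unfolding D_def by auto
  have card_lt: "card (Fr y') < card (Fr y)"
  proof -
    have "card (Fr y') \<le> card (Fr y - {e1})" using Frsub finFr by (intro card_mono) auto
    also have "\<dots> < card (Fr y)" using e1F finFr[of y] by (rule card_Diff1_less[rotated])
    finally show ?thesis .
  qed
  have Fvsub: "Fv y' v \<subseteq> Fv y v" for v using Frsub unfolding Fv_def by auto
  have same_off: "y' e = y e" if "e \<notin> Fr y" for e using dsupp that unfolding y'_def by simp
  have lo': "lo y' v > -1 \<and> lo y' v + card (Fv y' v) \<le> 1" if v: "v \<in> V" and c1: "card (Fv y' v) \<le> 1" for v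
  proof (cases "2 \<le> card (Fv y v)")
    case True
    have "(\<Sum>e\<in>I v. y' e) = (\<Sum>e\<in>I v. y e) + t * (\<Sum>e\<in>I v. d e)"
      unfolding y'_def by (simp add: sum.distrib sum_distrib_left)
    hence "(\<Sum>e\<in>I v. y' e) = S v" using inv v True dcon unfolding Inv_def by auto
    thus ?thesis using tight_lo c1 by blast
  next
    case False
    hence c1y: "card (Fv y v) \<le> 1" by simp
    have old: "lo y v > -1 \<and> lo y v + card (Fv y v) \<le> 1" using inv v c1y unfolding Inv_def by auto
    show ?thesis
    proof (cases "Fv y' v = Fv y v")
      case True
      have "I v - Fr y' = I v - Fr y"
        using True unfolding Fv_def by blast
      moreover have "(\<Sum>e\<in>I v - Fr y. y' e) = (\<Sum>e\<in>I v - Fr y. y e)"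
        using same_off by (intro sum.cong) auto
      ultimately have "lo y' v = lo y v" unfolding lo_def by simp
      thus ?thesis using old True by simp
    next
      case False
      hence "Fv y' v \<subset> Fv y v" using Fvsub by auto
      hence ne: "Fv y v \<noteq> {}" by auto
      hence "card (Fv y v) = 1" using c1y finFv[of y v] card_gt_0_iff[of "Fv y v"] by linarith
      then obtain e where e: "Fv y v = {e}" by (auto simp: card_Suc_eq)
      hence e': "Fv y' v = {}" using \<open>Fv y' v \<subset> Fv y v\<close> by auto
      have eI: "e \<in> I v" "e \<in> Fr y" using e unfolding Fv_def by auto
      have eE: "e \<in> E" using eI unfolding Fr_def by auto
      have "I v - Fr y' = insert e (I v - Fr y)"
        using e e' eI unfolding Fv_def by blast
      hence "(\<Sum>e\<in>I v - Fr y'. y' e) = y' e + (\<Sum>e\<in>I v - Fr y. y' e)"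
        using finI eI by (simp add: sum.insert_if)
      also have "(\<Sum>e\<in>I v - Fr y. y' e) = (\<Sum>e\<in>I v - Fr y. y e)"
        using same_off by (intro sum.cong) auto
      finally have "lo y' v = y' e + lo y v" unfolding lo_def by simp
      thus ?thesis using old e e' bnd[OF eE] by simp
    qed
  qed
  have Inv': "Inv y'"
    unfolding Inv_def
  proof (intro conjI ballI impI)
    fix e assume "e \<in> E" thus "0 \<le> y' e" "y' e \<le> 1" using bnd by auto
  next
    fix v assume v: "v \<in> V" and c2: "2 \<le> card (Fv y' v)"
    have "card (Fv y' v) \<le> card (Fv y v)" using Fvsub finFv by (intro card_mono)
    hence c2': "2 \<le> card (Fv y v)" using c2 by simp
    have "(\<Sum>e\<in>I v. y' e) = (\<Sum>e\<in>I v. y e) + t * (\<Sum>e\<in>I v. d e)"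
      unfolding y'_def by (simp add: sum.distrib sum_distrib_left)
    thus "(\<Sum>e\<in>I v. y' e) = S v" using inv v c2' dcon unfolding Inv_def by auto
  next
    fix v assume "v \<in> V" "card (Fv y' v) \<le> 1"
    thus "lo y' v > -1" using lo' by blast
  next
    fix v assume "v \<in> V" "card (Fv y' v) \<le> 1"
    thus "lo y' v + card (Fv y' v) \<le> 1" using lo' by blast
  qed
  show ?thesis using Inv' card_lt by blast
qed

end

context rnd begin

lemma I_eq: "I v = {e\<in>E. v \<in> e}" unfolding incident_edges_def by simp

lemma Fv_eq: "Fv y v = {e\<in>Fr y. v \<in> e}" unfolding Fv_def I_eq Fr_def by auto

lemma round1:
  fixes r :: real
  assumes inv: "Inv y" and eF: "e \<in> Fr y" and r: "r = 0 \<or> r = 1"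
    and cond: "\<forall>v\<in>V. v \<in> e \<longrightarrow> card (Fv y v) = 2 \<and> (r = 1 \<longrightarrow> (\<Sum>g\<in>Fv y v. y g) \<ge> 1)
                 \<and> (r = 0 \<longrightarrow> (\<Sum>g\<in>Fv y v. y g) < 1)"
  shows "\<exists>y'. Inv y' \<and> card (Fr y') < card (Fr y)"
proof -
  define y' where "y' = y(e := r)"
  have eE: "e \<in> E" using eF unfolding Fr_def by auto
  have Fr': "Fr y' = Fr y - {e}" unfolding Fr_def y'_def using r by auto
  have Fv': "Fv y' v = Fv y v - {e}" for v unfolding Fv_def Fr' by auto
  have card_lt: "card (Fr y') < card (Fr y)" unfolding Fr' using eF finFr[of y]
    by (rule card_Diff1_less[rotated])
  have Inv': "Inv y'"
    unfolding Inv_def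
  proof (rule conjI)
    show "\<forall>g\<in>E. 0 \<le> y' g \<and> y' g \<le> 1" using inv r unfolding Inv_def y'_def by auto
  next
    show "\<forall>v\<in>V. (2 \<le> card (Fv y' v) \<longrightarrow> (\<Sum>e\<in>I v. y' e) = S v) \<and>
           (card (Fv y' v) \<le> 1 \<longrightarrow> lo y' v > -1 \<and> lo y' v + card (Fv y' v) \<le> 1)"
    proof
    fix v assume v: "v \<in> V"
    show "(2 \<le> card (Fv y' v) \<longrightarrow> (\<Sum>e\<in>I v. y' e) = S v) \<and>
           (card (Fv y' v) \<le> 1 \<longrightarrow> lo y' v > -1 \<and> lo y' v + card (Fv y' v) \<le> 1)"
    proof (cases "v \<in> e")
      case False
      hence eI: "e \<notin> I v" unfolding I_eq by auto
      hence "Fv y' v = Fv y v" unfolding Fv_def Fr' by blast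
      moreover have "(\<Sum>e\<in>I v. y' e) = (\<Sum>e\<in>I v. y e)" using eI unfolding y'_def
        by (intro sum.cong) auto
      moreover have "lo y' v = lo y v"
      proof -
        have "I v - Fr y' = I v - Fr y" using eI unfolding Fr' by blast
        moreover have "(\<Sum>g\<in>I v - Fr y. y' g) = (\<Sum>g\<in>I v - Fr y. y g)"
          using eI unfolding y'_def by (intro sum.cong) auto
        ultimately show ?thesis unfolding lo_def by simp
      qed
      ultimately show ?thesis using inv v unfolding Inv_def by simp
    next
      case True
      have c2: "card (Fv y v) = 2" and c1: "r = 1 \<longrightarrow> (\<Sum>g\<in>Fv y v. y g) \<ge> 1"
        and c0: "r = 0 \<longrightarrow> (\<Sum>g\<in>Fv y v. y g) < 1" using cond v True by auto
      have eI: "e \<in> I v" using True eE unfolding I_eq by auto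
      have eFv: "e \<in> Fv y v" using eI eF unfolding Fv_def by auto
      have cF1: "card (Fv y' v) = 1" unfolding Fv' using c2 eFv finFv[of y v] by simp
      have tight: "(\<Sum>e\<in>I v. y e) = S v" using inv v c2 unfolding Inv_def by auto
      hence lo: "lo y v = - (\<Sum>g\<in>Fv y v. y g)" using sum_split[of y v] by simp
      have "I v - Fr y' = insert e (I v - Fr y)" unfolding Fr' using eI by auto
      hence "(\<Sum>g\<in>I v - Fr y'. y' g) = y' e + (\<Sum>g\<in>I v - Fr y. y' g)"
        using finI eF by (simp add: sum.insert_if)
      also have "(\<Sum>g\<in>I v - Fr y. y' g) = (\<Sum>g\<in>I v - Fr y. y g)"
        using eF unfolding y'_def by (intro sum.cong) auto
      finally have A: "(\<Sum>g\<in>I v - Fr y'. y' g) = y' e + (\<Sum>g\<in>I v - Fr y. y g)" .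
      have ye: "y' e = r" by (simp add: y'_def)
      have "lo y' v = r + lo y v" unfolding lo_def using A ye by simp
      hence lo': "lo y' v = r - (\<Sum>g\<in>Fv y v. y g)" using lo by simp
      have fr: "0 < y g \<and> y g < 1" if "g \<in> Fv y v" for g using that unfolding Fv_def Fr_def by auto
      have "(\<Sum>g\<in>Fv y v. y g) < (\<Sum>g\<in>Fv y v. 1)"
        using eFv fr finFv[of y v] by (intro sum_strict_mono) auto
      hence lt2: "(\<Sum>g\<in>Fv y v. y g) < 2" using c2 by simp
      have ge0: "(\<Sum>g\<in>Fv y v. y g) \<ge> 0" using fr by (intro sum_nonneg) (simp add: less_imp_le)
      show ?thesis using cF1 lo' r c1 c0 lt2 ge0 by auto
    qed
    qed
  qed
  show ?thesis using Inv' card_lt by blast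
qed

lemma deg_sum: "(\<Sum>v\<in>V. card (Fv y v)) = 2 * card (Fr y)"
proof -
  have "(\<Sum>v\<in>V. card (Fv y v)) = (\<Sum>v\<in>V. \<Sum>e\<in>Fr y. if v \<in> e then 1 else 0)"
    unfolding Fv_eq using finFr[of y] by (intro sum.cong refl) (simp add: sum.inter_filter[symmetric])
  also have "\<dots> = (\<Sum>e\<in>Fr y. \<Sum>v\<in>V. if v \<in> e then 1 else 0)" by (rule sum.swap)
  also have "\<dots> = (\<Sum>e\<in>Fr y. card {v\<in>V. v \<in> e})"
    using finV by (intro sum.cong refl) (simp add: sum.inter_filter[symmetric])
  also have "\<dots> = (\<Sum>e\<in>Fr y. 2)"
  proof (intro sum.cong refl)
    fix e assume "e \<in> Fr y"
    hence "e \<in> E" unfolding Fr_def by auto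
    hence "{v\<in>V. v \<in> e} = e" "card e = 2" using edges by auto
    thus "card {v\<in>V. v \<in> e} = 2" by simp
  qed
  finally show ?thesis by simp
qed

end

context rnd begin

lemma step:
  assumes inv: "Inv y" and ne: "Fr y \<noteq> {}"
  shows "\<exists>y'. Inv y' \<and> card (Fr y') < card (Fr y)"
proof -
  define F where "F = Fr y"
  define T where "T = {v\<in>V. 2 \<le> card (Fv y v)}"
  define a where "a = (\<lambda>(v::'a) (e::'a set). if v \<in> e then (1::real) else 0)"
  have finT: "finite T" unfolding T_def using finV by simp
  have finF: "finite F" unfolding F_def using finFr .
  have FE: "F \<subseteq> E" unfolding F_def Fr_def by auto
  have conv: "(\<Sum>e\<in>I v. d e) = (\<Sum>e\<in>F. a v e * d e)" if dz: "\<forall>e. e \<notin> F \<longrightarrow> d e = 0" for d :: "'a set \<Rightarrow> real" and v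
  proof -
    have "(\<Sum>e\<in>I v. d e) = (\<Sum>e\<in>I v \<inter> F. d e) + (\<Sum>e\<in>I v - F. d e)"
      using sum.Int_Diff[OF finI] by blast
    also have "(\<Sum>e\<in>I v - F. d e) = 0" using dz by (intro sum.neutral) auto
    also have "I v \<inter> F = {e\<in>F. v \<in> e}" unfolding I_eq using FE by auto
    also have "(\<Sum>e\<in>{e\<in>F. v \<in> e}. d e) = (\<Sum>e\<in>F. a v e * d e)"
    proof -
      have "(\<Sum>e\<in>{e\<in>F. v \<in> e}. d e) = (\<Sum>e\<in>F. if v \<in> e then d e else 0)"
        using finF by (simp add: sum.inter_filter)
      also have "\<dots> = (\<Sum>e\<in>F. a v e * d e)" unfolding a_def by (intro sum.cong) auto
      finally show ?thesis .
    qed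
    finally show ?thesis by simp
  qed
  have fromker: "\<exists>y'. Inv y' \<and> card (Fr y') < card (Fr y)"
    if d1: "\<forall>e. e \<notin> F \<longrightarrow> d e = 0" and d2: "\<exists>e\<in>F. d e \<noteq> 0"
      and d3: "\<forall>v\<in>T. (\<Sum>e\<in>F. a v e * d e) = 0" for d :: "'a set \<Rightarrow> real"
  proof -
    from d2 obtain e0 where e0: "e0 \<in> F" "d e0 \<noteq> 0" by auto
    have "\<forall>v\<in>V. 2 \<le> card (Fv y v) \<longrightarrow> (\<Sum>e\<in>I v. d e) = 0"
      using d3 conv[OF d1] unfolding T_def by auto
    moreover have "\<forall>e. e \<notin> Fr y \<longrightarrow> d e = 0" using d1 unfolding F_def .
    moreover have "e0 \<in> Fr y" using e0(1) unfolding F_def .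
    ultimately show ?thesis using move[of y d e0] inv e0(2) by blast
  qed
  show ?thesis
  proof (cases "card T < card F")
    case True
    from kernel_exists[OF finT finF True, of a] fromker show ?thesis by blast
  next
    case False
    have ds: "(\<Sum>v\<in>V. card (Fv y v)) = 2 * card F" unfolding F_def by (rule deg_sum)
    have TV: "T \<subseteq> V" unfolding T_def by auto
    have spl: "(\<Sum>v\<in>V. card (Fv y v)) = (\<Sum>v\<in>V - T. card (Fv y v)) + (\<Sum>v\<in>T. card (Fv y v))"
      using sum.subset_diff[OF TV finV] by blast
    have ge: "(\<Sum>v\<in>T. card (Fv y v)) \<ge> (\<Sum>v\<in>T. 2)" by (intro sum_mono) (auto simp: T_def)
    hence ge': "(\<Sum>v\<in>T. card (Fv y v)) \<ge> 2 * card T" by simp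
    have B0: "(\<Sum>v\<in>V - T. card (Fv y v)) = 0" and A2: "(\<Sum>v\<in>T. card (Fv y v)) = 2 * card T"
      and cTF: "card T = card F"
      using ds spl ge' False by linarith+
    have c0: "card (Fv y v) = 0" if "v \<in> V - T" for v using B0 that finV by simp
    have "(\<Sum>v\<in>T. card (Fv y v) - 2) = (\<Sum>v\<in>T. card (Fv y v)) - (\<Sum>v\<in>T. 2)"
      by (rule sum_subtractf_nat) (auto simp: T_def)
    hence "(\<Sum>v\<in>T. card (Fv y v) - 2) = 0" using A2 by simp
    hence c2: "card (Fv y v) = 2" if "v \<in> T" for v using that finT by (auto simp: T_def)
    have inT: "v \<in> T \<and> card (Fv y v) = 2" if "e \<in> F" "v \<in> e" for e v
    proof -
      have vV: "v \<in> V" using that FE edges by auto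
      have "e \<in> Fv y v" using that unfolding Fv_eq F_def by auto
      hence "card (Fv y v) \<noteq> 0" using finFv[of y v] by auto
      hence "v \<in> T" using c0[of v] vV by (metis DiffI)
      thus ?thesis using c2 by auto
    qed
    define c where "c v = (\<Sum>g\<in>Fv y v. y g)" for v
    show ?thesis
    proof (cases "\<exists>e\<in>F. \<exists>u w. e = {u, w} \<and> u \<noteq> w \<and> ((c u \<ge> 1 \<and> c w \<ge> 1) \<or> (c u < 1 \<and> c w < 1))")
      case True
      then obtain e u w where e: "e \<in> F" "e = {u, w}" "u \<noteq> w"
        and cc: "(c u \<ge> 1 \<and> c w \<ge> 1) \<or> (c u < 1 \<and> c w < 1)" by blast
      have eF: "e \<in> Fr y" using e F_def by simp
      show ?thesis
      proof (cases "c u \<ge> 1 \<and> c w \<ge> 1")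
        case True
        show ?thesis
        proof (rule round1[OF inv eF, of 1])
          show "\<forall>v\<in>V. v \<in> e \<longrightarrow> card (Fv y v) = 2 \<and> (1 = (1::real) \<longrightarrow> (\<Sum>g\<in>Fv y v. y g) \<ge> 1)
                 \<and> ((1::real) = 0 \<longrightarrow> (\<Sum>g\<in>Fv y v. y g) < 1)"
            using inT[OF e(1)] True e(2) unfolding c_def by auto
        qed simp
      next
        case False
        hence cc': "c u < 1 \<and> c w < 1" using cc by auto
        show ?thesis
        proof (rule round1[OF inv eF, of 0])
          show "\<forall>v\<in>V. v \<in> e \<longrightarrow> card (Fv y v) = 2 \<and> (0 = (1::real) \<longrightarrow> (\<Sum>g\<in>Fv y v. y g) \<ge> 1)
                 \<and> ((0::real) = 0 \<longrightarrow> (\<Sum>g\<in>Fv y v. y g) < 1)"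
            using inT[OF e(1)] cc' e(2) unfolding c_def by auto
        qed simp
      qed
    next
      case mixed: False
      from ne obtain e1 where e1: "e1 \<in> F" unfolding F_def by auto
      hence "e1 \<in> E" using FE by auto
      hence "card e1 = 2" using edges by auto
      then obtain u w where uw: "e1 = {u, w}" "u \<noteq> w" by (auto simp: card_2_iff)
      define v0 where "v0 = u"
      have v0T: "v0 \<in> T" using inT[OF e1] uw unfolding v0_def by auto
      have "card (T - {v0}) = card T - 1" using v0T finT by simp
      moreover have "card F > 0" using e1 finF card_gt_0_iff by auto
      ultimately have cT': "card (T - {v0}) < card F" using cTF by simp
      from kernel_exists[OF _ finF cT', of a] finT obtain d where
        d1: "\<forall>e. e \<notin> F \<longrightarrow> d e = 0" and d2: "\<exists>e\<in>F. d e \<noteq> 0"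
        and d3: "\<forall>v\<in>T - {v0}. (\<Sum>e\<in>F. a v e * d e) = 0" by auto
      define \<sigma> where "\<sigma> v = (if c v \<ge> 1 then 1 else (-1::real))" for v
      define rv where "rv v = (\<Sum>e\<in>F. a v e * d e)" for v
      have inner: "(\<Sum>v\<in>T. \<sigma> v * a v e) = 0" if eF: "e \<in> F" for e
      proof -
        have "card e = 2" using eF FE edges by auto
        then obtain p q where pq: "e = {p, q}" "p \<noteq> q" by (auto simp: card_2_iff)
        have eT: "e \<subseteq> T" using inT[OF eF] by auto
        have "(\<Sum>v\<in>T. \<sigma> v * a v e) = (\<Sum>v\<in>T. if v \<in> e then \<sigma> v else 0)"
          unfolding a_def by (intro sum.cong) auto
        also have "\<dots> = (\<Sum>v\<in>{v\<in>T. v \<in> e}. \<sigma> v)" using finT by (simp add: sum.inter_filter)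
        also have "{v\<in>T. v \<in> e} = e" using eT by auto
        also have "(\<Sum>v\<in>e. \<sigma> v) = \<sigma> p + \<sigma> q" using pq by simp
        also have "\<dots> = 0"
        proof -
          have "\<not> ((c p \<ge> 1 \<and> c q \<ge> 1) \<or> (c p < 1 \<and> c q < 1))" using mixed eF pq by blast
          thus ?thesis unfolding \<sigma>_def by auto
        qed
        finally show ?thesis .
      qed
      have "(\<Sum>v\<in>T. \<sigma> v * rv v) = (\<Sum>v\<in>T. \<Sum>e\<in>F. d e * (\<sigma> v * a v e))"
        unfolding rv_def by (simp add: sum_distrib_left mult.commute mult.left_commute)
      also have "\<dots> = (\<Sum>e\<in>F. \<Sum>v\<in>T. d e * (\<sigma> v * a v e))" by (rule sum.swap)
      also have "\<dots> = (\<Sum>e\<in>F. d e * (\<Sum>v\<in>T. \<sigma> v * a v e))" by (simp add: sum_distrib_left)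
      also have "\<dots> = 0" using inner by simp
      finally have tot: "(\<Sum>v\<in>T. \<sigma> v * rv v) = 0" .
      have "(\<Sum>v\<in>T. \<sigma> v * rv v) = \<sigma> v0 * rv v0 + (\<Sum>v\<in>T - {v0}. \<sigma> v * rv v)"
        using sum.remove[OF finT v0T] by blast
      also have "(\<Sum>v\<in>T - {v0}. \<sigma> v * rv v) = 0" using d3 unfolding rv_def by simp
      finally have "\<sigma> v0 * rv v0 = 0" using tot by simp
      moreover have "\<sigma> v0 \<noteq> 0" unfolding \<sigma>_def by simp
      ultimately have "rv v0 = 0" by simp
      hence "\<forall>v\<in>T. (\<Sum>e\<in>F. a v e * d e) = 0" using d3 unfolding rv_def by blast
      thus ?thesis using fromker d1 d2 by blast
    qed
  qed
qed

end

context rnd begin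

lemma main:
  "Inv y \<Longrightarrow> \<exists>x. (\<forall>e\<in>E. x e \<in> {0, 1}) \<and>
     (\<forall>v\<in>V. S v - 1 < (\<Sum>e\<in>I v. x e) \<and> (\<Sum>e\<in>I v. x e) \<le> S v + 1)"
proof (induction "card (Fr y)" arbitrary: y rule: less_induct)
  case less
  show ?case
  proof (cases "Fr y = {}")
    case False
    from step[OF less.prems False] obtain y' where "Inv y'" "card (Fr y') < card (Fr y)" by blast
    thus ?thesis using less.hyps by blast
  next
    case True
    show ?thesis
    proof (intro exI[of _ y] conjI ballI)
      fix e assume e: "e \<in> E"
      hence "0 \<le> y e" "y e \<le> 1" using less.prems unfolding Inv_def by auto
      moreover have "\<not> (0 < y e \<and> y e < 1)" using True e unfolding Fr_def by auto
      ultimately show "y e \<in> {0, 1}" by auto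
    next
      fix v assume v: "v \<in> V"
      have "Fv y v = {}" unfolding Fv_def True by simp
      hence "lo y v > -1 \<and> lo y v \<le> 1" using less.prems v unfolding Inv_def by auto
      moreover have "lo y v = (\<Sum>e\<in>I v. y e) - S v" unfolding lo_def True by simp
      ultimately show "S v - 1 < (\<Sum>e\<in>I v. y e)" "(\<Sum>e\<in>I v. y e) \<le> S v + 1" by auto
    qed
  qed
qed

lemma init:
  assumes "\<forall>e\<in>E. 0 \<le> z e \<and> z e \<le> 1"
  shows "Inv z"
  unfolding Inv_def using assms tight_lo S_def by auto

end

theorem lemma4p1:
  fixes V :: "'a set" and E :: "'a set set" and z :: "'a set \<Rightarrow> real"
  assumes "finite_simple_graph V E"
    and "\<forall>e\<in>E. 0 \<le> z e \<and> z e \<le> 1"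
  shows "\<exists>x :: 'a set \<Rightarrow> real. (\<forall>e\<in>E. x e \<in> {0, 1}) \<and>
           (\<forall>v\<in>V. (\<Sum>e\<in>incident_edges E v. z e) - 1 < (\<Sum>e\<in>incident_edges E v. x e) \<and>
                   (\<Sum>e\<in>incident_edges E v. x e) \<le> (\<Sum>e\<in>incident_edges E v. z e) + 1)"
proof -
  interpret rnd V E z using assms(1) unfolding finite_simple_graph_def by unfold_locales auto
  show ?thesis using main[OF init[OF assms(2)]] unfolding S_def by simp
qed

end
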